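(* Let $\boldsymbol{d}$ be a graphical degree sequence with minimum degree at least $3$. Let $(G,H)$ be a switch on $\mathcal{G}(n,\boldsymbol{d})$ which removes the edges $a_1a_2,a_3a_4$ and inserts the edges $a_1a_3,a_2a_4$. Let $D=\{a_1,a_2,a_3,a_4\}$ and $A_i=N(a_i)\setminus D$ for $i\in[4]$. Suppose at least one of the following holds: (i) at least one of the diagonals $a_1a_4$, $a_2a_3$ is an edge of $G$; (ii) neither diagonal is an edge of $G$, and some pair of distinct elements of $D$ has a common neighbour in $[n]\setminus D$; (iii) for some $j\in[4]$ there is a triangle in $G$ on vertices $a_j,u,w$ with $\{u,w\}\cap D=\emptyset$ and $u\notin A_{5-j}$. Then there is a triangle-switch simulation path of length at most $4$ from $G$ to $H$.
   Context: $\mathcal{G}(n,\boldsymbol{d})$ is the set of labelled simple graphs on $[n]$ with vertex $i$ of degree $d_i$. A switch $(G,H)$ on $\mathcal{G}(n,\boldsymbol{d})$: $G\in\mathcal{G}(n,\boldsymbol{d})$, $F$ is a set of two vertex-disjoint edges of $G$ on vertex set $\{a_1,a_2,a_3,a_4\}$, $F'$ is a different perfect matching of these four vertices with $F'\cap(E(G)\setminus F)=\emptyset$, and $H$ has edge set $(E(G)\setminus F)\cup F'$. A triangle switch is a switch $(G,H)$ such that for some pair $aa'\in F\cup F'$, $a$ and $a'$ have a common neighbour in $G$ outside $\{a_1,a_2,a_3,a_4\}$. $N(a)$ denotes the neighbourhood of $a$ in $G$. A triangle-switch simulation path of length $\kappa$ from $G$ to $H$ is a sequence $G=X_0,X_1,\dots,X_\kappa=H$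 of graphs in $\mathcal{G}(n,\boldsymbol{d})$ such that each $(X_i,X_{i+1})$ is a triangle switch. *)

theory Defs
  imports Main
begin

text \<open>A labelled simple graph on [n] = {1..n} is represented by its edge set:
  a set of 2-element subsets of {1..n}.\<close>

type_synonym graph = "nat set set"

definition Gnd :: "nat \<Rightarrow> (nat \<Rightarrow> nat) \<Rightarrow> graph set" where
  "Gnd n d = {E. (\<forall>e\<in>E. e \<subseteq> {1..n} \<and> card e = 2)
               \<and> (\<forall>i\<in>{1..n}. card {e\<in>E. i \<in> e} = d i)}"

definition graphical :: "nat \<Rightarrow> (nat \<Rightarrow> nat) \<Rightarrow> bool" where
  "graphical n d \<longleftrightarrow> Gnd n d \<noteq> {}"

definition nbhd :: "graph \<Rightarrow> nat \<Rightarrow> nat set" where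
  "nbhd G a = {v. {a, v} \<in> G}"

definition perfect_matchings4 :: "nat \<Rightarrow> nat \<Rightarrow> nat \<Rightarrow> nat \<Rightarrow> nat set set set" where
  "perfect_matchings4 a1 a2 a3 a4 =
     {{{a1,a2},{a3,a4}}, {{a1,a3},{a2,a4}}, {{a1,a4},{a2,a3}}}"

definition switch_data :: "nat \<Rightarrow> (nat \<Rightarrow> nat) \<Rightarrow> graph \<Rightarrow> graph \<Rightarrow>
    nat \<Rightarrow> nat \<Rightarrow> nat \<Rightarrow> nat \<Rightarrow> nat set set \<Rightarrow> bool" where
  "switch_data n d G H a1 a2 a3 a4 F' \<longleftrightarrow>
     G \<in> Gnd n d \<and> H \<in> Gnd n d \<and> distinct [a1, a2, a3, a4] \<and>
     {{a1,a2},{a3,a4}} \<subseteq> G \<and>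
     F' \<in> perfect_matchings4 a1 a2 a3 a4 \<and> F' \<noteq> {{a1,a2},{a3,a4}} \<and>
     F' \<inter> (G - {{a1,a2},{a3,a4}}) = {} \<and>
     H = (G - {{a1,a2},{a3,a4}}) \<union> F'"

definition is_switch :: "nat \<Rightarrow> (nat \<Rightarrow> nat) \<Rightarrow> graph \<Rightarrow> graph \<Rightarrow> bool" where
  "is_switch n d G H \<longleftrightarrow> (\<exists>a1 a2 a3 a4 F'. switch_data n d G H a1 a2 a3 a4 F')"

definition triangle_switch :: "nat \<Rightarrow> (nat \<Rightarrow> nat) \<Rightarrow> graph \<Rightarrow> graph \<Rightarrow> bool" where
  "triangle_switch n d G H \<longleftrightarrow>
     (\<exists>a1 a2 a3 a4 F'. switch_data n d G H a1 a2 a3 a4 F' \<and>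
        (\<exists>p \<in> {{a1,a2},{a3,a4}} \<union> F'. \<exists>a a'. p = {a, a'} \<and>
           (\<exists>c. c \<notin> {a1,a2,a3,a4} \<and> c \<in> nbhd G a \<and> c \<in> nbhd G a')))"

definition ts_sim_path :: "nat \<Rightarrow> (nat \<Rightarrow> nat) \<Rightarrow> graph \<Rightarrow> graph \<Rightarrow> nat \<Rightarrow> (nat \<Rightarrow> graph) \<Rightarrow> bool" where
  "ts_sim_path n d G H \<kappa> X \<longleftrightarrow>
     X 0 = G \<and> X \<kappa> = H \<and> (\<forall>i\<le>\<kappa>. X i \<in> Gnd n d) \<and>
     (\<forall>i<\<kappa>. triangle_switch n d (X i) (X (Suc i)))"

end

theory Submission
  imports Defs
begin

definition swp :: "graph \<Rightarrow> nat \<Rightarrow> nat \<Rightarrow> nat \<Rightarrow> nat \<Rightarrow> graph" where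
  "swp G x1 x2 x3 x4 = (G - {{x1,x2},{x3,x4}}) \<union> {{x1,x3},{x2,x4}}"

definition okk :: "graph \<Rightarrow> nat \<Rightarrow> nat \<Rightarrow> nat \<Rightarrow> nat \<Rightarrow> bool" where
  "okk G x1 x2 x3 x4 \<longleftrightarrow> distinct [x1,x2,x3,x4] \<and> {x1,x2}\<in>G \<and> {x3,x4}\<in>G \<and> {x1,x3}\<notin>G \<and> {x2,x4}\<notin>G"

definition tri :: "graph \<Rightarrow> nat \<Rightarrow> nat \<Rightarrow> nat \<Rightarrow> nat \<Rightarrow> bool" where
  "tri G x1 x2 x3 x4 \<longleftrightarrow> (\<exists>c. c \<notin> {x1,x2,x3,x4} \<and>
     (({x1,c}\<in>G \<and> {x2,c}\<in>G) \<or> ({x3,c}\<in>G \<and> {x4,c}\<in>G) \<or> ({x1,c}\<in>G \<and> {x3,c}\<in>G) \<or> ({x2,c}\<in>G \<and> {x4,c}\<in>G)))"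

lemma mem_swp: "e \<in> swp G x1 x2 x3 x4 \<longleftrightarrow> (e \<in> G \<and> e \<noteq> {x1,x2} \<and> e \<noteq> {x3,x4}) \<or> e = {x1,x3} \<or> e = {x2,x4}"
  unfolding swp_def by auto

lemma Gnd_edge: "G \<in> Gnd n d \<Longrightarrow> e \<in> G \<Longrightarrow> e \<subseteq> {1..n} \<and> card e = 2"
  unfolding Gnd_def by auto

lemma Gnd_noloop: "G \<in> Gnd n d \<Longrightarrow> {v} \<notin> G"
  using Gnd_edge[of G n d "{v}"] by auto

lemma Gnd_finite: "G \<in> Gnd n d \<Longrightarrow> finite G"
proof -
  assume "G \<in> Gnd n d"
  then have "G \<subseteq> Pow {1..n}" using Gnd_edge by blast
  then show ?thesis using finite_subset by blast
qed

lemma card_pairs: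
  assumes "distinct [x1,x2,x3,x4]"
  shows "card {e \<in> {{x1,x2},{x3,x4}}. i \<in> e} = (if i \<in> {x1,x2,x3,x4} then 1 else 0)"
proof -
  have a: "i \<in> {x1,x2} \<Longrightarrow> {e \<in> {{x1,x2},{x3,x4}}. i \<in> e} = {{x1,x2}}" using assms by auto
  have b: "i \<in> {x3,x4} \<Longrightarrow> {e \<in> {{x1,x2},{x3,x4}}. i \<in> e} = {{x3,x4}}" using assms by auto
  have c: "i \<notin> {x1,x2,x3,x4} \<Longrightarrow> {e \<in> {{x1,x2},{x3,x4}}. i \<in> e} = {}" by auto
  show ?thesis
  proof (cases "i \<in> {x1,x2}")
    case True then show ?thesis unfolding a[OF True] by auto
  next
    case f: False
    show ?thesis
    proof (cases "i \<in> {x3,x4}")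
      case True then show ?thesis unfolding b[OF True] by auto
    next
      case False then have nn: "i \<notin> {x1,x2,x3,x4}" using f by blast
      show ?thesis unfolding c[OF nn] using nn by auto
    qed
  qed
qed

lemma swp_Gnd:
  assumes G: "G \<in> Gnd n d" and ok: "okk G x1 x2 x3 x4"
  shows "swp G x1 x2 x3 x4 \<in> Gnd n d"
proof -
  have dist: "distinct [x1,x2,x3,x4]" and e12: "{x1,x2}\<in>G" and e34: "{x3,x4}\<in>G"
    and n13: "{x1,x3}\<notin>G" and n24: "{x2,x4}\<notin>G" using ok unfolding okk_def by auto
  have r1: "{x1,x2} \<subseteq> {1..n}" and r2: "{x3,x4} \<subseteq> {1..n}" using Gnd_edge[OF G e12] Gnd_edge[OF G e34] by auto
  have edges: "\<forall>e\<in>swp G x1 x2 x3 x4. e \<subseteq> {1..n} \<and> card e = 2"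
  proof
    fix e assume "e \<in> swp G x1 x2 x3 x4"
    then have "e \<in> G \<or> e = {x1,x3} \<or> e = {x2,x4}" unfolding mem_swp by auto
    then show "e \<subseteq> {1..n} \<and> card e = 2"
    proof (elim disjE)
      assume "e \<in> G" then show ?thesis using Gnd_edge[OF G] by blast
    next
      assume "e = {x1,x3}" then show ?thesis using r1 r2 dist by auto
    next
      assume "e = {x2,x4}" then show ?thesis using r1 r2 dist by auto
    qed
  qed
  have fin: "finite G" using Gnd_finite[OF G] .
  have deg: "card {e\<in>swp G x1 x2 x3 x4. i \<in> e} = d i" if i: "i \<in> {1..n}" for i
  proof -
    let ?R = "{e \<in> {{x1,x2},{x3,x4}}. i \<in> e}"
    let ?A = "{e \<in> {{x1,x3},{x2,x4}}. i \<in> e}"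
    let ?Gi = "{e\<in>G. i \<in> e}"
    have eq: "{e\<in>swp G x1 x2 x3 x4. i \<in> e} = (?Gi - ?R) \<union> ?A"
      unfolding swp_def by auto
    have d1: "distinct [x1,x3,x2,x4]" using dist by auto
    have cR: "card ?R = card ?A"
      using card_pairs[OF dist, of i] card_pairs[OF d1, of i] by auto
    have sub: "?R \<subseteq> ?Gi" using e12 e34 by blast
    have disj: "(?Gi - ?R) \<inter> ?A = {}" using n13 n24 by blast
    have fR: "finite ?R" by simp
    have fA: "finite ?A" by simp
    have fGi: "finite ?Gi" using fin by simp
    have c1: "card ((?Gi - ?R) \<union> ?A) = card (?Gi - ?R) + card ?A"
      using card_Un_disjoint[OF finite_Diff[OF fGi] fA disj] .
    have c2: "card (?Gi - ?R) = card ?Gi - card ?R"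
      using card_Diff_subset[OF fR sub] .
    have c3: "card ?R \<le> card ?Gi" using card_mono[OF fGi sub] .
    have c4: "card ?Gi = d i" using G i unfolding Gnd_def by auto
    show ?thesis unfolding eq c1 c2 c4[symmetric] using c3 cR by simp
  qed
  have "(\<forall>e\<in>swp G x1 x2 x3 x4. e \<subseteq> {1..n} \<and> card e = 2) \<and> (\<forall>i\<in>{1..n}. card {e\<in>swp G x1 x2 x3 x4. i \<in> e} = d i)"
    using edges deg by (intro conjI ballI) auto
  then show ?thesis unfolding Gnd_def by (rule CollectI)
qed

lemma swp_ts:
  assumes G: "G \<in> Gnd n d" and ok: "okk G x1 x2 x3 x4" and t: "tri G x1 x2 x3 x4"
  shows "triangle_switch n d G (swp G x1 x2 x3 x4)"
proof -
  have dist: "distinct [x1,x2,x3,x4]" and e12: "{x1,x2}\<in>G" and e34: "{x3,x4}\<in>G"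
    and n13: "{x1,x3}\<notin>G" and n24: "{x2,x4}\<notin>G" using ok unfolding okk_def by auto
  have ne: "{{x1,x3},{x2,x4}} \<noteq> {{x1,x2},{x3,x4}}"
  proof
    assume h: "{{x1,x3},{x2,x4}} = {{x1,x2},{x3,x4}}"
    have "{x1,x3} \<in> {{x1,x3},{x2,x4}}" by simp
    then have "{x1,x3} \<in> {{x1,x2},{x3,x4}}" by (simp only: h)
    then have o: "{x1,x3} = {x1,x2} \<or> {x1,x3} = {x3,x4}" by simp
    have n1: "{x1,x3} \<noteq> {x1,x2}" using dist by (simp add: doubleton_eq_iff)
    have n2: "{x1,x3} \<noteq> {x3,x4}" using dist by (simp add: doubleton_eq_iff)
    show False using o n1 n2 by blast
  qed
  have dj: "{{x1,x3},{x2,x4}} \<inter> (G - {{x1,x2},{x3,x4}}) = {}" using n13 n24 by blast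
  have pm: "{{x1,x3},{x2,x4}} \<in> perfect_matchings4 x1 x2 x3 x4"
    unfolding perfect_matchings4_def by blast
  have sub: "{{x1,x2},{x3,x4}} \<subseteq> G" using e12 e34 by blast
  have sd: "switch_data n d G (swp G x1 x2 x3 x4) x1 x2 x3 x4 {{x1,x3},{x2,x4}}"
    unfolding switch_data_def
    using G swp_Gnd[OF G ok] dist sub pm ne dj by (simp add: swp_def)
  obtain c where c: "c \<notin> {x1,x2,x3,x4}" and
    cc: "({x1,c}\<in>G \<and> {x2,c}\<in>G) \<or> ({x3,c}\<in>G \<and> {x4,c}\<in>G) \<or> ({x1,c}\<in>G \<and> {x3,c}\<in>G) \<or> ({x2,c}\<in>G \<and> {x4,c}\<in>G)"
    using t unfolding tri_def by blast
  have nb: "c \<in> nbhd G p \<longleftrightarrow> {p,c} \<in> G" for p unfolding nbhd_def by simp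
  let ?P = "\<lambda>p. \<exists>a a'. p = {a, a'} \<and> (\<exists>c. c \<notin> {x1,x2,x3,x4} \<and> c \<in> nbhd G a \<and> c \<in> nbhd G a')"
  have "\<exists>p \<in> {{x1,x2},{x3,x4}} \<union> {{x1,x3},{x2,x4}}. ?P p"
  proof -
    have w: "?P {p,q}" if "{p,c} \<in> G" "{q,c} \<in> G" for p q
      using c that nb by blast
    from cc show ?thesis
    proof (elim disjE conjE)
      assume "{x1,c}\<in>G" "{x2,c}\<in>G" then show ?thesis using w[of x1 x2] by blast
    next
      assume "{x3,c}\<in>G" "{x4,c}\<in>G" then show ?thesis using w[of x3 x4] by blast
    next
      assume "{x1,c}\<in>G" "{x3,c}\<in>G" then show ?thesis using w[of x1 x3] by blast
    next
      assume "{x2,c}\<in>G" "{x4,c}\<in>G" then show ?thesis using w[of x2 x4] by blast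
    qed
  qed
  then show ?thesis unfolding triangle_switch_def using sd by blast
qed


lemma step:
  assumes G: "G \<in> Gnd n d" and ok: "okk G x1 x2 x3 x4" and t: "tri G x1 x2 x3 x4"
  shows "swp G x1 x2 x3 x4 \<in> Gnd n d \<and> triangle_switch n d G (swp G x1 x2 x3 x4)"
  using swp_Gnd[OF G ok] swp_ts[OF G ok t] by blast

lemma path1:
  assumes "G \<in> Gnd n d" "H \<in> Gnd n d" "triangle_switch n d G H"
  shows "\<exists>\<kappa> X. \<kappa> \<le> 4 \<and> ts_sim_path n d G H \<kappa> X"
proof -
  let ?X = "\<lambda>i::nat. if i = 0 then G else H"
  have "ts_sim_path n d G H 1 ?X" unfolding ts_sim_path_def
  proof (intro conjI allI impI)
    fix i :: nat assume "i \<le> 1" then have "i = 0 \<or> i = 1" by auto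
    then show "?X i \<in> Gnd n d" using assms by auto
  next
    fix i :: nat assume "i < 1" then have "i = 0" by auto
    then show "triangle_switch n d (?X i) (?X (Suc i))" using assms by auto
  qed auto
  then show ?thesis by (intro exI[of _ 1] exI[of _ ?X]) auto
qed

lemma path2:
  assumes "G \<in> Gnd n d" "X1 \<in> Gnd n d" "H \<in> Gnd n d" "triangle_switch n d G X1"
    "triangle_switch n d X1 H"
  shows "\<exists>\<kappa> X. \<kappa> \<le> 4 \<and> ts_sim_path n d G H \<kappa> X"
proof -
  let ?X = "\<lambda>i::nat. if i = 0 then G else if i = 1 then X1 else H"
  have "ts_sim_path n d G H 2 ?X" unfolding ts_sim_path_def
  proof (intro conjI allI impI)
    fix i :: nat assume "i \<le> 2" then have "i = 0 \<or> i = 1 \<or> i = 2" by auto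
    then show "?X i \<in> Gnd n d" using assms by auto
  next
    fix i :: nat assume "i < 2" then have "i = 0 \<or> i = 1" by auto
    then show "triangle_switch n d (?X i) (?X (Suc i))" using assms by auto
  qed auto
  then show ?thesis by (intro exI[of _ 2] exI[of _ ?X]) auto
qed

lemma path3:
  assumes "G \<in> Gnd n d" "X1 \<in> Gnd n d" "X2 \<in> Gnd n d" "H \<in> Gnd n d" "triangle_switch n d G X1"
    "triangle_switch n d X1 X2" "triangle_switch n d X2 H"
  shows "\<exists>\<kappa> X. \<kappa> \<le> 4 \<and> ts_sim_path n d G H \<kappa> X"
proof -
  let ?X = "\<lambda>i::nat. if i = 0 then G else if i = 1 then X1 else if i = 2 then X2 else H"
  have "ts_sim_path n d G H 3 ?X" unfolding ts_sim_path_def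
  proof (intro conjI allI impI)
    fix i :: nat assume "i \<le> 3" then have "i = 0 \<or> i = 1 \<or> i = 2 \<or> i = 3" by auto
    then show "?X i \<in> Gnd n d" using assms by auto
  next
    fix i :: nat assume "i < 3" then have "i = 0 \<or> i = 1 \<or> i = 2" by auto
    then show "triangle_switch n d (?X i) (?X (Suc i))" using assms by auto
  qed auto
  then show ?thesis by (intro exI[of _ 3] exI[of _ ?X]) auto
qed

lemma chain1:
  assumes G: "G \<in> Gnd n d" and "okk G x1 x2 x3 x4" "tri G x1 x2 x3 x4"
  shows "\<exists>\<kappa> X. \<kappa> \<le> 4 \<and> ts_sim_path n d G (swp G x1 x2 x3 x4) \<kappa> X"
  using step[OF assms] G path1 by blast

lemma chain2:
  assumes G: "G \<in> Gnd n d" and o1: "okk G x1 x2 x3 x4" and t1: "tri G x1 x2 x3 x4"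
    and o2: "okk (swp G x1 x2 x3 x4) y1 y2 y3 y4" and t2: "tri (swp G x1 x2 x3 x4) y1 y2 y3 y4"
    and H: "swp (swp G x1 x2 x3 x4) y1 y2 y3 y4 = H"
  shows "\<exists>\<kappa> X. \<kappa> \<le> 4 \<and> ts_sim_path n d G H \<kappa> X"
proof -
  note s1 = step[OF G o1 t1]
  note s2 = step[OF conjunct1[OF s1] o2 t2]
  show ?thesis using path2[OF G conjunct1[OF s1] _ conjunct2[OF s1]] s2 H by blast
qed

lemma chain3:
  assumes G: "G \<in> Gnd n d" and o1: "okk G x1 x2 x3 x4" and t1: "tri G x1 x2 x3 x4"
    and o2: "okk (swp G x1 x2 x3 x4) y1 y2 y3 y4" and t2: "tri (swp G x1 x2 x3 x4) y1 y2 y3 y4"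
    and o3: "okk (swp (swp G x1 x2 x3 x4) y1 y2 y3 y4) z1 z2 z3 z4"
    and t3: "tri (swp (swp G x1 x2 x3 x4) y1 y2 y3 y4) z1 z2 z3 z4"
    and H: "swp (swp (swp G x1 x2 x3 x4) y1 y2 y3 y4) z1 z2 z3 z4 = H"
  shows "\<exists>\<kappa> X. \<kappa> \<le> 4 \<and> ts_sim_path n d G H \<kappa> X"
proof -
  note s1 = step[OF G o1 t1]
  note s2 = step[OF conjunct1[OF s1] o2 t2]
  note s3 = step[OF conjunct1[OF s2] o3 t3]
  show ?thesis using path3[OF G conjunct1[OF s1] conjunct1[OF s2] _ conjunct2[OF s1] conjunct2[OF s2]] s3 H by blast
qed

lemma nbr3:
  assumes G: "G \<in> Gnd n d" and deg: "\<forall>i\<in>{1..n}. 3 \<le> d i" and e: "{v,w} \<in> G"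
  shows "\<exists>z. {v,z} \<in> G \<and> z \<noteq> p \<and> z \<noteq> q"
proof (rule ccontr)
  assume nz: "\<not> (\<exists>z. {v,z} \<in> G \<and> z \<noteq> p \<and> z \<noteq> q)"
  have v: "v \<in> {1..n}" using Gnd_edge[OF G e] by auto
  have cd: "card {e\<in>G. v \<in> e} = d v" using G v unfolding Gnd_def by auto
  have sub: "{e\<in>G. v \<in> e} \<subseteq> {{v,p},{v,q}}"
  proof
    fix e assume h: "e \<in> {e\<in>G. v \<in> e}"
    then have eG: "e \<in> G" and ve: "v \<in> e" by auto
    have "card e = 2" using Gnd_edge[OF G eG] by auto
    then obtain x y where xy: "e = {x,y}" "x \<noteq> y" by (auto simp: card_2_iff)
    then have "\<exists>z. e = {v,z}" using ve by (auto simp: insert_commute)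
    then obtain z where ez: "e = {v,z}" by blast
    then have "z = p \<or> z = q" using nz eG by blast
    then show "e \<in> {{v,p},{v,q}}" using ez by auto
  qed
  have "card {e\<in>G. v \<in> e} \<le> card {{v,p},{v,q}}" by (rule card_mono[OF _ sub]) simp
  also have "\<dots> \<le> 2" by (simp add: card_insert_le_m1)
  finally have "d v \<le> 2" using cd by simp
  moreover have "3 \<le> d v" using deg v by blast
  ultimately show False by simp
qed

lemma T_third:
  assumes G: "G \<in> Gnd n d" and ok: "okk G p1 p2 p3 p4"
    and n14: "{p1,p4} \<notin> G" and n23: "{p2,p3} \<notin> G"
    and c: "c \<notin> {p1,p2,p3,p4}" and c1: "{p1,c} \<in> G" and c4: "{p4,c} \<in> G"
  shows "\<exists>\<kappa> X. \<kappa> \<le> 4 \<and> ts_sim_path n d G (swp G p1 p2 p3 p4) \<kappa> X"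
proof -
  have dist: "distinct [p1,p2,p3,p4]" and e12: "{p1,p2}\<in>G" and e34: "{p3,p4}\<in>G"
    and n13: "{p1,p3}\<notin>G" and n24: "{p2,p4}\<notin>G" using ok unfolding okk_def by auto
  have e43: "{p4,p3} \<in> G" using e34 by (simp add: insert_commute)
  show ?thesis
  proof (rule chain2[OF G, of p1 p2 p4 p3 p1 p4 p3 p2])
    show "okk G p1 p2 p4 p3" unfolding okk_def using dist e12 e43 n14 n23 by (auto simp: insert_commute)
    show "tri G p1 p2 p4 p3" unfolding tri_def using c c1 c4 by blast
    show "okk (swp G p1 p2 p4 p3) p1 p4 p3 p2" unfolding okk_def mem_swp
      using dist e12 e43 n13 n24 n14 n23 by (auto simp: doubleton_eq_iff insert_commute)
    show "tri (swp G p1 p2 p4 p3) p1 p4 p3 p2" unfolding tri_def mem_swp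
      using c c1 c4 dist by (intro exI[of _ c]) (auto simp: doubleton_eq_iff)
    show "swp (swp G p1 p2 p4 p3) p1 p4 p3 p2 = swp G p1 p2 p3 p4"
      unfolding swp_def using dist e12 e34 n13 n24 n14 n23 by (auto simp: doubleton_eq_iff insert_commute)
  qed
qed

lemma V_gen:
  assumes G: "G \<in> Gnd n d" and ok: "okk G p1 p2 p3 p4"
    and z: "z \<notin> {p1,p2,p3,p4}" and e3z: "{p3,z} \<in> G" and n2z: "{p2,z} \<notin> G"
    and t1: "tri G p1 p2 p3 z" and t2: "tri (swp G p1 p2 p3 z) z p2 p3 p4"
  shows "\<exists>\<kappa> X. \<kappa> \<le> 4 \<and> ts_sim_path n d G (swp G p1 p2 p3 p4) \<kappa> X"
proof -
  have dist: "distinct [p1,p2,p3,p4]" and e12: "{p1,p2}\<in>G" and e34: "{p3,p4}\<in>G"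
    and n13: "{p1,p3}\<notin>G" and n24: "{p2,p4}\<notin>G" using ok unfolding okk_def by auto
  show ?thesis
  proof (rule chain2[OF G _ t1 _ t2])
    show "okk G p1 p2 p3 z" unfolding okk_def using dist z e12 e3z n13 n2z by (auto simp: insert_commute)
    show "okk (swp G p1 p2 p3 z) z p2 p3 p4" unfolding okk_def mem_swp
      using dist z e12 e3z n13 n2z e34 n24 by (auto simp: doubleton_eq_iff insert_commute)
    show "swp (swp G p1 p2 p3 z) z p2 p3 p4 = swp G p1 p2 p3 p4"
      unfolding swp_def using dist z e12 e3z n13 n2z e34 n24 by (auto simp: doubleton_eq_iff insert_commute)
  qed
qed

lemma V_tri:
  assumes G: "G \<in> Gnd n d" and ok: "okk G p1 p2 p3 p4"
    and z: "z \<notin> {p1,p2,p3,p4}" and w: "w \<notin> {p1,p2,p3,p4}" and zw: "z \<noteq> w"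
    and e3z: "{p3,z} \<in> G" and e3w: "{p3,w} \<in> G" and ezw: "{z,w} \<in> G" and n2z: "{p2,z} \<notin> G"
  shows "\<exists>\<kappa> X. \<kappa> \<le> 4 \<and> ts_sim_path n d G (swp G p1 p2 p3 p4) \<kappa> X"
proof -
  have dist: "distinct [p1,p2,p3,p4]" using ok unfolding okk_def by auto
  show ?thesis
  proof (rule V_gen[OF G ok z e3z n2z])
    show "tri G p1 p2 p3 z" unfolding tri_def using z w zw e3w ezw
      by (intro exI[of _ w]) (auto simp: insert_commute)
    show "tri (swp G p1 p2 p3 z) z p2 p3 p4" unfolding tri_def mem_swp using dist z w zw e3w ezw
      by (intro exI[of _ w]) (auto simp: doubleton_eq_iff insert_commute)
  qed
qed

lemma V_diag:
  assumes G: "G \<in> Gnd n d" and ok: "okk G p1 p2 p3 p4"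
    and z: "z \<notin> {p1,p2,p3,p4}" and e3z: "{p3,z} \<in> G" and n2z: "{p2,z} \<notin> G"
    and e14: "{p1,p4} \<in> G"
  shows "\<exists>\<kappa> X. \<kappa> \<le> 4 \<and> ts_sim_path n d G (swp G p1 p2 p3 p4) \<kappa> X"
proof -
  have dist: "distinct [p1,p2,p3,p4]" and e12: "{p1,p2}\<in>G" and e34: "{p3,p4}\<in>G"
    and n13: "{p1,p3}\<notin>G" and n24: "{p2,p4}\<notin>G" using ok unfolding okk_def by auto
  show ?thesis
  proof (rule V_gen[OF G ok z e3z n2z])
    show "tri G p1 p2 p3 z" unfolding tri_def using z dist e14 e34
      by (intro exI[of _ p4]) (auto simp: insert_commute)
    show "tri (swp G p1 p2 p3 z) z p2 p3 p4" unfolding tri_def mem_swp using dist z e14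
      by (intro exI[of _ p1]) (auto simp: doubleton_eq_iff insert_commute)
  qed
qed

lemma set_conj:
  assumes "R1 \<subseteq> G" "A1 \<inter> G = {}" "R2 \<inter> A1 = {}" "R2 \<inter> R1 = {}" "A2 \<inter> R1 = {}" "A2 \<inter> A1 = {}"
  shows "(((G - R1) \<union> A1) - R2 \<union> A2) - A1 \<union> R1 = (G - R2) \<union> A2"
  using assms by blast

lemma swp_conj:
  assumes ok: "okk G s1 s2 s3 s4"
    and d1: "{{p1,p2},{p3,p4}} \<inter> {{s1,s3},{s2,s4}} = {}"
    and d2: "{{p1,p2},{p3,p4}} \<inter> {{s1,s2},{s3,s4}} = {}"
    and d3: "{{p1,p3},{p2,p4}} \<inter> {{s1,s2},{s3,s4}} = {}"
    and d4: "{{p1,p3},{p2,p4}} \<inter> {{s1,s3},{s2,s4}} = {}"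
  shows "swp (swp (swp G s1 s2 s3 s4) p1 p2 p3 p4) s1 s3 s2 s4 = swp G p1 p2 p3 p4"
proof -
  have R1: "{{s1,s2},{s3,s4}} \<subseteq> G" and A1: "{{s1,s3},{s2,s4}} \<inter> G = {}"
    using ok unfolding okk_def by auto
  show ?thesis unfolding swp_def by (rule set_conj[OF R1 A1 d1 d2 d3 d4])
qed

lemma conjA:
  assumes G: "G \<in> Gnd n d" and ok: "okk G p1 p2 p3 p4"
    and z: "z \<notin> {p1,p2,p3,p4}" and y: "y \<notin> {p1,p2,p3,p4}" and zy: "z \<noteq> y"
    and e14: "{p1,p4} \<in> G" and e3z: "{p3,z} \<in> G" and e2z: "{p2,z} \<in> G" and n4z: "{p4,z} \<notin> G"
    and ezy: "{z,y} \<in> G" and n1y: "{p1,y} \<notin> G"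
  shows "\<exists>\<kappa> X. \<kappa> \<le> 4 \<and> ts_sim_path n d G (swp G p1 p2 p3 p4) \<kappa> X"
proof -
  have dist: "distinct [p1,p2,p3,p4]" and e12: "{p1,p2}\<in>G" and e34: "{p3,p4}\<in>G"
    and n13: "{p1,p3}\<notin>G" and n24: "{p2,p4}\<notin>G" using ok unfolding okk_def by auto
  show ?thesis
  proof (rule chain3[OF G, of p4 p1 z y p1 p2 p3 p4 p4 z p1 y])
    show "okk G p4 p1 z y" unfolding okk_def using dist z y zy e14 ezy n4z n1y
      by (auto simp: insert_commute)
    show "tri G p4 p1 z y" unfolding tri_def using dist z y e34 e3z
      by (intro exI[of _ p3]) (auto simp: insert_commute)
    show "okk (swp G p4 p1 z y) p1 p2 p3 p4" unfolding okk_def mem_swp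
      using dist z y zy e12 e34 n13 n24 by (auto simp: doubleton_eq_iff insert_commute)
    show "tri (swp G p4 p1 z y) p1 p2 p3 p4" unfolding tri_def mem_swp
      using dist z y zy e3z by (intro exI[of _ z]) (auto simp: doubleton_eq_iff insert_commute)
    show "okk (swp (swp G p4 p1 z y) p1 p2 p3 p4) p4 z p1 y" unfolding okk_def mem_swp
      using dist z y zy by (auto simp: doubleton_eq_iff insert_commute)
    show "tri (swp (swp G p4 p1 z y) p1 p2 p3 p4) p4 z p1 y" unfolding tri_def mem_swp
      using dist z y zy e2z by (intro exI[of _ p2]) (auto simp: doubleton_eq_iff insert_commute)
    show "swp (swp (swp G p4 p1 z y) p1 p2 p3 p4) p4 z p1 y = swp G p1 p2 p3 p4"
      by (rule swp_conj[OF \<open>okk G p4 p1 z y\<close>]) (use dist z y zy in \<open>auto simp: doubleton_eq_iff\<close>)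
  qed
qed

lemma conjB:
  assumes G: "G \<in> Gnd n d" and ok: "okk G p1 p2 p3 p4"
    and z: "z \<notin> {p1,p2,p3,p4}" and y: "y \<notin> {p1,p2,p3,p4}" and zy: "z \<noteq> y"
    and e14: "{p1,p4} \<in> G" and e3z: "{p3,z} \<in> G" and e2z: "{p2,z} \<in> G" and n1z: "{p1,z} \<notin> G"
    and ezy: "{z,y} \<in> G" and n4y: "{p4,y} \<notin> G"
  shows "\<exists>\<kappa> X. \<kappa> \<le> 4 \<and> ts_sim_path n d G (swp G p1 p2 p3 p4) \<kappa> X"
proof -
  have dist: "distinct [p1,p2,p3,p4]" and e12: "{p1,p2}\<in>G" and e34: "{p3,p4}\<in>G"
    and n13: "{p1,p3}\<notin>G" and n24: "{p2,p4}\<notin>G" using ok unfolding okk_def by auto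
  show ?thesis
  proof (rule chain3[OF G, of p1 p4 z y p1 p2 p3 p4 p1 z p4 y])
    show "okk G p1 p4 z y" unfolding okk_def using dist z y zy e14 ezy n1z n4y
      by (auto simp: insert_commute)
    show "tri G p1 p4 z y" unfolding tri_def using dist z y e12 e2z
      by (intro exI[of _ p2]) (auto simp: insert_commute)
    show "okk (swp G p1 p4 z y) p1 p2 p3 p4" unfolding okk_def mem_swp
      using dist z y zy e12 e34 n13 n24 by (auto simp: doubleton_eq_iff insert_commute)
    show "tri (swp G p1 p4 z y) p1 p2 p3 p4" unfolding tri_def mem_swp
      using dist z y zy e2z by (intro exI[of _ z]) (auto simp: doubleton_eq_iff insert_commute)
    show "okk (swp (swp G p1 p4 z y) p1 p2 p3 p4) p1 z p4 y" unfolding okk_def mem_swp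
      using dist z y zy by (auto simp: doubleton_eq_iff insert_commute)
    show "tri (swp (swp G p1 p4 z y) p1 p2 p3 p4) p1 z p4 y" unfolding tri_def mem_swp
      using dist z y zy e3z by (intro exI[of _ p3]) (auto simp: doubleton_eq_iff insert_commute)
    show "swp (swp (swp G p1 p4 z y) p1 p2 p3 p4) p1 z p4 y = swp G p1 p2 p3 p4"
      by (rule swp_conj[OF \<open>okk G p1 p4 z y\<close>]) (use dist z y zy in \<open>auto simp: doubleton_eq_iff\<close>)
  qed
qed

lemma conjC:
  assumes G: "G \<in> Gnd n d" and ok: "okk G p1 p2 p3 p4"
    and z: "z \<notin> {p1,p2,p3,p4}" and y: "y \<notin> {p1,p2,p3,p4}" and zy: "z \<noteq> y"
    and e14: "{p1,p4} \<in> G" and e3z: "{p3,z} \<in> G" and n1z: "{p1,z} \<notin> G"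
    and e1y: "{p1,y} \<in> G" and e4y: "{p4,y} \<in> G" and n3y: "{p3,y} \<notin> G"
  shows "\<exists>\<kappa> X. \<kappa> \<le> 4 \<and> ts_sim_path n d G (swp G p1 p2 p3 p4) \<kappa> X"
proof -
  have dist: "distinct [p1,p2,p3,p4]" and e12: "{p1,p2}\<in>G" and e34: "{p3,p4}\<in>G"
    and n13: "{p1,p3}\<notin>G" and n24: "{p2,p4}\<notin>G" using ok unfolding okk_def by auto
  show ?thesis
  proof (rule chain3[OF G, of p3 z y p1 p1 p2 p3 p4 p3 y z p1])
    show "okk G p3 z y p1" unfolding okk_def using dist z y zy e3z e1y n3y n1z
      by (auto simp: insert_commute)
    show "tri G p3 z y p1" unfolding tri_def using dist z y e14 e4y
      by (intro exI[of _ p4]) (auto simp: insert_commute)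
    show "okk (swp G p3 z y p1) p1 p2 p3 p4" unfolding okk_def mem_swp
      using dist z y zy e12 e34 n13 n24 by (auto simp: doubleton_eq_iff insert_commute)
    show "tri (swp G p3 z y p1) p1 p2 p3 p4" unfolding tri_def mem_swp
      using dist z y zy e4y by (intro exI[of _ y]) (auto simp: doubleton_eq_iff insert_commute)
    show "okk (swp (swp G p3 z y p1) p1 p2 p3 p4) p3 y z p1" unfolding okk_def mem_swp
      using dist z y zy by (auto simp: doubleton_eq_iff insert_commute)
    show "tri (swp (swp G p3 z y p1) p1 p2 p3 p4) p3 y z p1" unfolding tri_def mem_swp
      using dist z y zy e4y e14 by (intro exI[of _ p4]) (auto simp: doubleton_eq_iff insert_commute)
    show "swp (swp (swp G p3 z y p1) p1 p2 p3 p4) p3 y z p1 = swp G p1 p2 p3 p4"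
      by (rule swp_conj[OF \<open>okk G p3 z y p1\<close>]) (use dist z y zy in \<open>auto simp: doubleton_eq_iff\<close>)
  qed
qed

lemma diag14:
  assumes G: "G \<in> Gnd n d" and ok: "okk G p1 p2 p3 p4" and deg: "\<forall>i\<in>{1..n}. 3 \<le> d i"
    and e14: "{p1,p4} \<in> G"
  shows "\<exists>\<kappa> X. \<kappa> \<le> 4 \<and> ts_sim_path n d G (swp G p1 p2 p3 p4) \<kappa> X"
proof -
  have dist: "distinct [p1,p2,p3,p4]" and e12: "{p1,p2}\<in>G" and e34: "{p3,p4}\<in>G"
    and n13: "{p1,p3}\<notin>G" and n24: "{p2,p4}\<notin>G" using ok unfolding okk_def by auto
  have nl: "{v,v} \<notin> G" for v using Gnd_noloop[OF G] by simp
  obtain z where e3z: "{p3,z} \<in> G" and z2: "z \<noteq> p2" and z4: "z \<noteq> p4"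
    using nbr3[OF G deg e34] by blast
  have z1: "z \<noteq> p1" using e3z n13 by (auto simp: insert_commute)
  have z3: "z \<noteq> p3" using e3z nl by auto
  have zD: "z \<notin> {p1,p2,p3,p4}" using z1 z2 z3 z4 by auto
  show ?thesis
  proof (cases "{p2,z} \<in> G")
    case False then show ?thesis using V_diag[OF G ok zD e3z False e14] by blast
  next
    case e2z: True
    show ?thesis
    proof (cases "{p1,z} \<in> G")
      case True
      have "tri G p1 p2 p3 p4" unfolding tri_def using zD True e2z by blast
      then show ?thesis using chain1[OF G ok] by blast
    next
      case n1z: False
      show ?thesis
      proof (cases "{p4,z} \<in> G")
        case True
        have "tri G p1 p2 p3 p4" unfolding tri_def using zD True e3z by blast
        then show ?thesis using chain1[OF G ok] by blast
      next
        case n4z: False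
        have ez3: "{z,p3} \<in> G" using e3z by (simp add: insert_commute)
        obtain y where ezy: "{z,y} \<in> G" and y2: "y \<noteq> p2" and y3: "y \<noteq> p3"
          using nbr3[OF G deg ez3] by blast
        have y1: "y \<noteq> p1" using ezy n1z by (auto simp: insert_commute)
        have y4: "y \<noteq> p4" using ezy n4z by (auto simp: insert_commute)
        have zy: "z \<noteq> y" using ezy nl by auto
        have yD: "y \<notin> {p1,p2,p3,p4}" using y1 y2 y3 y4 by auto
        show ?thesis
        proof (cases "{p1,y} \<in> G")
          case False
          then show ?thesis using conjA[OF G ok zD yD zy e14 e3z e2z n4z ezy] by blast
        next
          case e1y: True
          show ?thesis
          proof (cases "{p4,y} \<in> G")
            case False
            then show ?thesis using conjB[OF G ok zD yD zy e14 e3z e2z n1z ezy] by blast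
          next
            case e4y: True
            show ?thesis
            proof (cases "{p3,y} \<in> G")
              case True
              have "tri G p1 p2 p3 p4" unfolding tri_def using yD True e4y by blast
              then show ?thesis using chain1[OF G ok] by blast
            next
              case False
              then show ?thesis using conjC[OF G ok zD yD zy e14 e3z n1z e1y e4y] by blast
            qed
          qed
        qed
      qed
    qed
  qed
qed

lemma swp_s1: "swp G x1 x2 x3 x4 = swp G x2 x1 x4 x3"
  unfolding swp_def by (simp add: insert_commute)
lemma swp_s2: "swp G x1 x2 x3 x4 = swp G x3 x4 x1 x2"
  unfolding swp_def by (simp add: insert_commute)
lemma swp_s3: "swp G x1 x2 x3 x4 = swp G x4 x3 x2 x1"
  unfolding swp_def by (simp add: insert_commute)
lemma okk_s1: "okk G x1 x2 x3 x4 \<Longrightarrow> okk G x2 x1 x4 x3"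
  unfolding okk_def by (auto simp: insert_commute)
lemma okk_s2: "okk G x1 x2 x3 x4 \<Longrightarrow> okk G x3 x4 x1 x2"
  unfolding okk_def by (auto simp: insert_commute)
lemma okk_s3: "okk G x1 x2 x3 x4 \<Longrightarrow> okk G x4 x3 x2 x1"
  unfolding okk_def by (auto simp: insert_commute)

lemma case_i:
  assumes G: "G \<in> Gnd n d" and ok: "okk G p1 p2 p3 p4" and deg: "\<forall>i\<in>{1..n}. 3 \<le> d i"
    and h: "{p1,p4} \<in> G \<or> {p2,p3} \<in> G"
  shows "\<exists>\<kappa> X. \<kappa> \<le> 4 \<and> ts_sim_path n d G (swp G p1 p2 p3 p4) \<kappa> X"
  using h
proof
  assume "{p1,p4} \<in> G" then show ?thesis using diag14[OF G ok deg] by blast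
next
  assume "{p2,p3} \<in> G" then show ?thesis using diag14[OF G okk_s1[OF ok] deg] swp_s1 by metis
qed

lemma case_ii:
  assumes G: "G \<in> Gnd n d" and ok: "okk G p1 p2 p3 p4"
    and n14: "{p1,p4} \<notin> G" and n23: "{p2,p3} \<notin> G"
    and x: "x \<in> {p1,p2,p3,p4}" and y: "y \<in> {p1,p2,p3,p4}" and xy: "x \<noteq> y"
    and c: "c \<notin> {p1,p2,p3,p4}" and cx: "{x,c} \<in> G" and cy: "{y,c} \<in> G"
  shows "\<exists>\<kappa> X. \<kappa> \<le> 4 \<and> ts_sim_path n d G (swp G p1 p2 p3 p4) \<kappa> X"
proof -
  have "(({p1,c}\<in>G \<and> {p2,c}\<in>G) \<or> ({p3,c}\<in>G \<and> {p4,c}\<in>G) \<or> ({p1,c}\<in>G \<and> {p3,c}\<in>G) \<or> ({p2,c}\<in>G \<and> {p4,c}\<in>G))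
     \<or> ({p1,c}\<in>G \<and> {p4,c}\<in>G) \<or> ({p2,c}\<in>G \<and> {p3,c}\<in>G)"
    using x y xy cx cy by blast
  then consider "({p1,c}\<in>G \<and> {p2,c}\<in>G) \<or> ({p3,c}\<in>G \<and> {p4,c}\<in>G) \<or> ({p1,c}\<in>G \<and> {p3,c}\<in>G) \<or> ({p2,c}\<in>G \<and> {p4,c}\<in>G)"
    | "{p1,c}\<in>G \<and> {p4,c}\<in>G" | "{p2,c}\<in>G \<and> {p3,c}\<in>G" by blast
  then show ?thesis
  proof cases
    assume "({p1,c}\<in>G \<and> {p2,c}\<in>G) \<or> ({p3,c}\<in>G \<and> {p4,c}\<in>G) \<or> ({p1,c}\<in>G \<and> {p3,c}\<in>G) \<or> ({p2,c}\<in>G \<and> {p4,c}\<in>G)"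
    then have "tri G p1 p2 p3 p4" unfolding tri_def using c by blast
    then show ?thesis using chain1[OF G ok] by blast
  next
    assume "{p1,c}\<in>G \<and> {p4,c}\<in>G"
    then show ?thesis using T_third[OF G ok n14 n23 c] by blast
  next
    assume h: "{p2,c}\<in>G \<and> {p3,c}\<in>G"
    have c': "c \<notin> {p2,p1,p4,p3}" using c by blast
    have n32: "{p2,p3} \<notin> G" "{p1,p4} \<notin> G" using n14 n23 by auto
    show ?thesis using T_third[OF G okk_s1[OF ok] n32 c'] h swp_s1 by metis
  qed
qed

theorem lemma1:
  fixes n :: nat and d :: "nat \<Rightarrow> nat" and G H :: graph and a :: "nat \<Rightarrow> nat"
  assumes "graphical n d"
    and "\<forall>i\<in>{1..n}. 3 \<le> d i"
    and "switch_data n d G H (a 1) (a 2) (a 3) (a 4) {{a 1, a 3}, {a 2, a 4}}"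
    and "({a 1, a 4} \<in> G \<or> {a 2, a 3} \<in> G)
      \<or> ({a 1, a 4} \<notin> G \<and> {a 2, a 3} \<notin> G \<and>
         (\<exists>x\<in>a ` {1..4}. \<exists>y\<in>a ` {1..4}. x \<noteq> y \<and>
            (\<exists>c\<in>{1..n} - a ` {1..4}. c \<in> nbhd G x \<and> c \<in> nbhd G y)))
      \<or> (\<exists>j\<in>{1..4::nat}. \<exists>u w. {a j, u} \<in> G \<and> {a j, w} \<in> G \<and> {u, w} \<in> G \<and>
            u \<notin> a ` {1..4} \<and> w \<notin> a ` {1..4} \<and>
            u \<notin> nbhd G (a (5 - j)) - a ` {1..4})"
  shows "\<exists>\<kappa> X. \<kappa> \<le> 4 \<and> ts_sim_path n d G H \<kappa> X"
proof -
  have deg: "\<forall>i\<in>{1..n}. 3 \<le> d i" by (rule assms(2))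
  have G: "G \<in> Gnd n d" and dist: "distinct [a 1, a 2, a 3, a 4]"
    and sub: "{{a 1, a 2}, {a 3, a 4}} \<subseteq> G"
    and dj: "{{a 1, a 3}, {a 2, a 4}} \<inter> (G - {{a 1, a 2}, {a 3, a 4}}) = {}"
    and HH0: "H = (G - {{a 1, a 2}, {a 3, a 4}}) \<union> {{a 1, a 3}, {a 2, a 4}}"
    using assms(3) unfolding switch_data_def by auto
  have n13: "{a 1, a 3} \<notin> G"
  proof
    assume h: "{a 1, a 3} \<in> G"
    have "{a 1, a 3} \<noteq> {a 1, a 2}" "{a 1, a 3} \<noteq> {a 3, a 4}" using dist by (auto simp: doubleton_eq_iff)
    then show False using h dj by blast
  qed
  have n24: "{a 2, a 4} \<notin> G"
  proof
    assume h: "{a 2, a 4} \<in> G"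
    have "{a 2, a 4} \<noteq> {a 1, a 2}" "{a 2, a 4} \<noteq> {a 3, a 4}" using dist by (auto simp: doubleton_eq_iff)
    then show False using h dj by blast
  qed
  have ok: "okk G (a 1) (a 2) (a 3) (a 4)" unfolding okk_def using dist sub n13 n24 by auto
  have HH: "H = swp G (a 1) (a 2) (a 3) (a 4)" unfolding swp_def HH0 ..
  have I4: "{1..4::nat} = {1,2,3,4}" by auto
  have D: "a ` {1..4} = {a 1, a 2, a 3, a 4}" unfolding I4 by simp
  have nb: "c \<in> nbhd G x \<longleftrightarrow> {x,c} \<in> G" for c x unfolding nbhd_def by simp
  have nl: "{v,v} \<notin> G" for v using Gnd_noloop[OF G] by simp
  from assms(4) consider
      (i) "{a 1, a 4} \<in> G \<or> {a 2, a 3} \<in> G"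
    | (ii) "{a 1, a 4} \<notin> G \<and> {a 2, a 3} \<notin> G \<and>
         (\<exists>x\<in>a ` {1..4}. \<exists>y\<in>a ` {1..4}. x \<noteq> y \<and>
            (\<exists>c\<in>{1..n} - a ` {1..4}. c \<in> nbhd G x \<and> c \<in> nbhd G y))"
    | (iii) "\<exists>j\<in>{1..4::nat}. \<exists>u w. {a j, u} \<in> G \<and> {a j, w} \<in> G \<and> {u, w} \<in> G \<and>
            u \<notin> a ` {1..4} \<and> w \<notin> a ` {1..4} \<and>
            u \<notin> nbhd G (a (5 - j)) - a ` {1..4}" by blast
  then show ?thesis
  proof cases
    case i
    then show ?thesis unfolding HH using case_i[OF G ok deg] by blast
  next
    case ii
    have n14: "{a 1, a 4} \<notin> G" and n23: "{a 2, a 3} \<notin> G" using ii by blast+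
    have ex: "\<exists>x\<in>a ` {1..4}. \<exists>y\<in>a ` {1..4}. x \<noteq> y \<and>
            (\<exists>c\<in>{1..n} - a ` {1..4}. c \<in> nbhd G x \<and> c \<in> nbhd G y)" using ii by blast
    then obtain x y c where x0: "x \<in> a ` {1..4}" and y0: "y \<in> a ` {1..4}" and xy: "x \<noteq> y"
      and c0: "c \<in> {1..n} - a ` {1..4}" and cx0: "c \<in> nbhd G x" and cy0: "c \<in> nbhd G y"
      by blast
    have x: "x \<in> {a 1, a 2, a 3, a 4}" using x0 D by simp
    have y: "y \<in> {a 1, a 2, a 3, a 4}" using y0 D by simp
    have c: "c \<notin> {a 1, a 2, a 3, a 4}" using c0 D by simp
    have cx: "{x,c} \<in> G" using cx0 nb by simp
    have cy: "{y,c} \<in> G" using cy0 nb by simp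
    show ?thesis unfolding HH using case_ii[OF G ok n14 n23 x y xy c cx cy] .
  next
    case iii
    then obtain j where j: "j \<in> {1..4::nat}" and
      ex: "\<exists>u w. {a j, u} \<in> G \<and> {a j, w} \<in> G \<and> {u, w} \<in> G \<and>
            u \<notin> a ` {1..4} \<and> w \<notin> a ` {1..4} \<and>
            u \<notin> nbhd G (a (5 - j)) - a ` {1..4}" by blast
    then obtain u w where ju: "{a j, u} \<in> G" and jw: "{a j, w} \<in> G"
      and uw: "{u, w} \<in> G" and u0: "u \<notin> a ` {1..4}" and w0: "w \<notin> a ` {1..4}"
      and u50: "u \<notin> nbhd G (a (5 - j)) - a ` {1..4}" by blast
    have u: "u \<notin> {a 1, a 2, a 3, a 4}" using u0 D by simp
    have w: "w \<notin> {a 1, a 2, a 3, a 4}" using w0 D by simp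
    have "u \<notin> nbhd G (a (5 - j))" using u50 u0 by blast
    then have u5: "{a (5 - j), u} \<notin> G" using nb by simp
    have unw: "u \<noteq> w" using uw nl by auto
    have j4: "j = 1 \<or> j = 2 \<or> j = 3 \<or> j = 4" using j by auto
    then show ?thesis
    proof (elim disjE)
      assume jj: "j = 1"
      have u': "u \<notin> {a 3, a 4, a 1, a 2}" and w': "w \<notin> {a 3, a 4, a 1, a 2}" using u w by auto
      have "\<exists>\<kappa> X. \<kappa> \<le> 4 \<and> ts_sim_path n d G (swp G (a 3) (a 4) (a 1) (a 2)) \<kappa> X"
        using V_tri[OF G okk_s2[OF ok] u' w' unw] ju jw uw u5 jj by simp
      then show ?thesis unfolding HH using swp_s2 by metis
    next
      assume jj: "j = 2"
      have u': "u \<notin> {a 4, a 3, a 2, a 1}" and w': "w \<notin> {a 4, a 3, a 2, a 1}" using u w by auto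
      have "\<exists>\<kappa> X. \<kappa> \<le> 4 \<and> ts_sim_path n d G (swp G (a 4) (a 3) (a 2) (a 1)) \<kappa> X"
        using V_tri[OF G okk_s3[OF ok] u' w' unw] ju jw uw u5 jj by simp
      then show ?thesis unfolding HH using swp_s3 by metis
    next
      assume jj: "j = 3"
      show ?thesis unfolding HH
        using V_tri[OF G ok u w unw] ju jw uw u5 jj by simp
    next
      assume jj: "j = 4"
      have u': "u \<notin> {a 2, a 1, a 4, a 3}" and w': "w \<notin> {a 2, a 1, a 4, a 3}" using u w by auto
      have "\<exists>\<kappa> X. \<kappa> \<le> 4 \<and> ts_sim_path n d G (swp G (a 2) (a 1) (a 4) (a 3)) \<kappa> X"
        using V_tri[OF G okk_s1[OF ok] u' w' unw] ju jw uw u5 jj by simp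
      then show ?thesis unfolding HH using swp_s1 by metis
    qed
  qed
qed

end
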